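(* Let \[ r=\frac{1}{4} \left( -1 + \sqrt{33} - \sqrt{2 \left(9 - \sqrt{33} \right)} \right). \] Then \[ 3 \operatorname{Li}_{2}(r^6) + 3 \operatorname{Li}_{2}(r^4) - 8 \operatorname{Li}_{2}(r^3) - 33 \operatorname{Li}_{2}(r^2) + 24 \operatorname{Li}_{2}(r) - \zeta(2) = 6 \log^2(r). \]
   Context: $\operatorname{Li}_2(x)=\sum_{n\ge1}x^n/n^2$ is the dilogarithm and $\zeta(2)=\pi^2/6$. *)

theory Defs
  imports "HOL-Analysis.Analysis"
begin

definition Li2 :: "real \<Rightarrow> real" where
  "Li2 x = (\<Sum>n. x ^ Suc n / (real (Suc n))\<^sup>2)"

definition zeta2 :: real where
  "zeta2 = pi\<^sup>2 / 6"

end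

theory Submission
  imports Defs "HOL-Real_Asymp.Real_Asymp"
begin

lemma ln1m_sums: "\<bar>x::real\<bar> < 1 \<Longrightarrow> (\<lambda>n. x ^ n / real (Suc n)) sums (- ln (1 - x) / x)" if "x \<noteq> 0"
proof -
  assume a: "\<bar>x\<bar> < 1"
  have "\<bar>-x\<bar> < 1" using a by simp
  from ln_series'[OF this] have "(\<lambda>n. - ((- (-x)) ^ n) / real n) sums ln (1 + - x)" .
  hence "(\<lambda>n. - (x ^ n) / real n) sums ln (1 - x)" by simp
  hence "(\<lambda>n. - (x ^ Suc n) / real (Suc n)) sums ln (1 - x)"
    by (subst sums_Suc_iff) simp
  hence "(\<lambda>n. - (x ^ Suc n) / real (Suc n) / (- x)) sums (ln (1 - x) / (-x))"
    by (rule sums_divide)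
  moreover have "(\<lambda>n. - (x ^ Suc n) / real (Suc n) / (- x)) = (\<lambda>n. x ^ n / real (Suc n))"
    using that by (intro ext) (simp add: field_simps del: of_nat_Suc)
  ultimately show ?thesis by simp
qed

lemma Li2_eq: "Li2 = (\<lambda>x. \<Sum>n. (1 / (real (Suc n))\<^sup>2) * x ^ Suc n)"
  unfolding Li2_def by (auto simp: field_simps)

lemma Li2_deriv:
  assumes "0 < x" "x < 1"
  shows "(Li2 has_real_derivative (- ln (1 - x) / x)) (at x)"
proof -
  have s: "summable (\<lambda>n. (1 / (real (Suc n))\<^sup>2) * real (Suc n) * z ^ n)" if "z \<in> {-1<..<1}" for z :: real
  proof -
    have "\<bar>z\<bar> < 1" using that by auto
    hence "summable (\<lambda>n. \<bar>z\<bar> ^ n)" by (simp add: summable_geometric)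
    moreover have "norm ((1 / (real (Suc n))\<^sup>2) * real (Suc n) * z ^ n) \<le> \<bar>z\<bar> ^ n" for n
    proof -
      have "norm ((1 / (real (Suc n))\<^sup>2) * real (Suc n) * z ^ n) = \<bar>z\<bar> ^ n / real (Suc n)"
        by (simp add: power2_eq_square abs_mult power_abs field_simps del: of_nat_Suc)
      also have "\<dots> \<le> \<bar>z\<bar> ^ n" by (simp add: divide_le_eq del: of_nat_Suc) (simp add: mult_le_cancel_left1)
      finally show ?thesis .
    qed
    ultimately show ?thesis by (rule summable_comparison_test'[where N=0])
  qed
  have "DERIV (\<lambda>x. (\<Sum>n. (1 / (real (Suc n))\<^sup>2) * x^(Suc n))) x :> (\<Sum>n. (1 / (real (Suc n))\<^sup>2) * real (Suc n) * x^n)"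
    by (rule DERIV_power_series'[where R=1]) (use s assms in auto)
  moreover have "(\<Sum>n. (1 / (real (Suc n))\<^sup>2) * real (Suc n) * x^n) = - ln (1 - x) / x"
  proof -
    have "(\<lambda>n. (1 / (real (Suc n))\<^sup>2) * real (Suc n) * x^n) = (\<lambda>n. x ^ n / real (Suc n))"
      by (auto simp: power2_eq_square field_simps simp del: of_nat_Suc)
    thus ?thesis using ln1m_sums[of x] assms by (simp add: sums_iff)
  qed
  ultimately show ?thesis by (simp add: Li2_eq)
qed

lemma Li2_cont: "continuous_on {-1..1} Li2"
proof -
  have sm: "summable (\<lambda>i. 1 / (real (Suc i))\<^sup>2)"
    using inverse_squares_sums by (simp add: sums_iff add.commute)
  have ul: "uniform_limit {-1..1} (\<lambda>n x. \<Sum>i<n. x ^ Suc i / (real (Suc i))\<^sup>2) (\<lambda>x. \<Sum>i. x ^ Suc i / (real (Suc i))\<^sup>2) sequentially"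
  proof (rule Weierstrass_m_test[where M="\<lambda>i. 1 / (real (Suc i))\<^sup>2"])
    fix i and x::real assume "x \<in> {-1..1}"
    hence "\<bar>x\<bar> \<le> 1" by auto
    hence "\<bar>x\<bar> ^ Suc i \<le> 1" by (rule power_le_one[OF abs_ge_zero])
    thus "norm (x ^ Suc i / (real (Suc i))\<^sup>2) \<le> 1 / (real (Suc i))\<^sup>2"
      by (simp add: power_abs abs_divide divide_right_mono del: of_nat_Suc power_Suc)
  qed (rule sm)
  have "continuous_on {-1..1} (\<lambda>x. \<Sum>i. x ^ Suc i / (real (Suc i))\<^sup>2)"
    by (intro uniform_limit_theorem[OF _ ul]) (auto intro!: always_eventually continuous_intros)
  thus ?thesis by (simp add: Li2_def[abs_def])
qed

lemma Li2_0: "Li2 0 = 0" by (simp add: Li2_def)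

lemma Li2_1: "Li2 1 = pi\<^sup>2 / 6"
  using inverse_squares_sums unfolding Li2_def by (simp add: sums_iff add.commute)

lemma Li2_lim0: "(Li2 \<longlongrightarrow> 0) (at_right 0)"
proof -
  have "isCont Li2 0"
    by (rule continuous_on_interior[OF Li2_cont]) simp
  hence "(Li2 \<longlongrightarrow> 0) (at 0)" by (simp add: isCont_def Li2_0)
  thus ?thesis by (rule tendsto_mono[OF at_within_le_at])
qed

lemma Li2_lim1: "(Li2 \<longlongrightarrow> pi\<^sup>2 / 6) (at_left 1)"
proof -
  have "continuous_on {0..1} Li2" by (rule continuous_on_subset[OF Li2_cont]) auto
  hence "(Li2 \<longlongrightarrow> Li2 1) (at 1 within {0..1})"
    by (simp add: continuous_on_def)
  thus ?thesis by (simp add: at_within_Icc_at_left Li2_1)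
qed

definition RogL :: "real \<Rightarrow> real" where
  "RogL x = Li2 x + ln x * ln (1 - x) / 2"

definition Ld :: "real \<Rightarrow> real" where
  "Ld z = - (ln (1 - z) / z + ln z / (1 - z)) / 2"

lemma RogL_deriv:
  assumes "0 < z" "z < 1"
  shows "(RogL has_real_derivative Ld z) (at z)"
proof -
  have h: "0 < 1 - z" using assms by simp
  have 1: "(Li2 has_real_derivative (- ln (1 - z) / z)) (at z)" by (rule Li2_deriv[OF assms])
  have 2: "(ln has_real_derivative (1 / z)) (at z)" by (rule DERIV_ln_divide[OF assms(1)])
  have 3: "((\<lambda>z. 1 - z) has_real_derivative (0 - 1)) (at z)" by (intro DERIV_diff DERIV_const DERIV_ident)
  note 4 = DERIV_chain2[OF DERIV_ln_divide[OF h] 3]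
  note 5 = DERIV_add[OF 1 DERIV_cdivide[OF DERIV_mult[OF 2 4], of 2]]
  show ?thesis unfolding RogL_def[abs_def]
    by (rule DERIV_cong[OF 5]) (use assms in \<open>simp add: Ld_def field_simps\<close>)
qed

lemma RogL_chain:
  assumes "(f has_real_derivative f') (at y)" "0 < f y" "f y < 1"
  shows "((\<lambda>y. RogL (f y)) has_real_derivative (Ld (f y) * f')) (at y)"
  using DERIV_chain2[OF RogL_deriv[OF assms(2,3)] assms(1)] .

lemma RogL_isCont: "0 < z \<Longrightarrow> z < 1 \<Longrightarrow> isCont RogL z"
  using RogL_deriv DERIV_isCont by blast

lemma RogL_lim0: "(RogL \<longlongrightarrow> 0) (at_right 0)"
proof -
  have "((\<lambda>x::real. ln x * ln (1 - x)) \<longlongrightarrow> 0) (at_right 0)" by real_asymp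
  hence "((\<lambda>x. Li2 x + ln x * ln (1 - x) / 2) \<longlongrightarrow> 0 + 0 / 2) (at_right 0)"
    by (intro tendsto_intros Li2_lim0) auto
  thus ?thesis by (simp add: RogL_def[abs_def])
qed

lemma RogL_lim0_comp:
  assumes "(f \<longlongrightarrow> 0) F" "eventually (\<lambda>x. f x > 0) F"
  shows "((\<lambda>x. RogL (f x)) \<longlongrightarrow> 0) F"
proof -
  have "filterlim f (at_right 0) F" by (rule tendsto_imp_filterlim_at_right[OF assms])
  thus ?thesis using RogL_lim0 by (rule filterlim_compose[rotated])
qed

lemma RogL_refl:
  assumes "0 < x" "x < 1"
  shows "RogL x + RogL (1 - x) = pi\<^sup>2 / 6"
proof -
  define g where "g y = RogL y + RogL (1 - y)" for y
  have d: "(g has_real_derivative 0) (at y within {0<..<1})" if "y \<in> {0<..<1}" for y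
  proof -
    have "(g has_real_derivative (Ld y + Ld (1 - y) * (- 1))) (at y)"
      unfolding g_def using that
      by (auto intro!: derivative_eq_intros RogL_deriv RogL_chain)
    moreover have "Ld y + Ld (1 - y) * (- 1) = 0" by (simp add: Ld_def)
    ultimately show ?thesis by (simp add: has_field_derivative_at_within)
  qed
  obtain c where c: "\<forall>y\<in>{0<..<1}. g y = c"
    using has_field_derivative_zero_constant[OF convex_real_interval(8) d] by blast
  have l1: "((\<lambda>y. Li2 (1 - y)) \<longlongrightarrow> pi\<^sup>2 / 6) (at_right 0)"
  proof -
    have "filterlim (\<lambda>y::real. 1 - y) (at_left 1) (at_right 0)" by real_asymp
    thus ?thesis using Li2_lim1 by (rule filterlim_compose[rotated])
  qed
  have l2: "((\<lambda>x::real. ln (1 - x) * ln (1 - (1 - x))) \<longlongrightarrow> 0) (at_right 0)" by real_asymp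
  have "(g \<longlongrightarrow> 0 + (pi\<^sup>2 / 6 + 0 / 2)) (at_right 0)"
    unfolding g_def RogL_def[of "1 - _"]
    by (intro tendsto_intros RogL_lim0 l1 l2) auto
  hence lim: "(g \<longlongrightarrow> pi\<^sup>2 / 6) (at_right 0)" by simp
  have "eventually (\<lambda>y. g y = c) (at_right (0::real))"
    using c eventually_at_right_real[of 0 1] by (auto elim: eventually_mono)
  hence gc: "(g \<longlongrightarrow> c) (at_right 0)" by (rule tendsto_eventually)
  have "c = pi\<^sup>2 / 6" by (rule tendsto_unique[OF _ gc lim]) simp
  thus ?thesis using c assms by (auto simp: g_def)
qed

lemma five_alg:
  fixes x y p q w A B C D E :: real
  assumes nz: "x \<noteq> 0" "y \<noteq> 0" "p \<noteq> 0" "q \<noteq> 0" "w \<noteq> 0"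
    and eq: "p = 1 - y" "q = 1 - x" "w = 1 - x * y"
  shows "0 + - (D / y + B / p) / 2 - - (E / (x * y) + (A + B) / w) / 2 * x
    - - ((C - E) / (x * p / w) + (A + D - E) / (q / w)) / 2 * (- x * q / w\<^sup>2)
    - - ((D - E) / (y * q / w) + (B + C - E) / (p / w)) / 2 * (q / w\<^sup>2) = 0"
  using nz
  apply (simp add: field_simps power2_eq_square)
  apply (simp add: eq)
  apply algebra
  done

lemma RogL_five:
  assumes x: "0 < x" "x < 1" and y0: "0 < y0" "y0 < 1"
  shows "RogL x + RogL y0 = RogL (x * y0) + RogL (x * (1 - y0) / (1 - x * y0)) + RogL (y0 * (1 - x) / (1 - x * y0))"
proof -
  define g where "g y = RogL x + RogL y - RogL (x * y) - RogL (x * (1 - y) / (1 - x * y)) - RogL (y * (1 - x) / (1 - x * y))" for y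
  have facts: "0 < x * y" "x * y < 1" "0 < 1 - x * y"
      "0 < x * (1 - y) / (1 - x * y)" "x * (1 - y) / (1 - x * y) < 1"
      "0 < y * (1 - x) / (1 - x * y)" "y * (1 - x) / (1 - x * y) < 1"
      "1 - x * (1 - y) / (1 - x * y) = (1 - x) / (1 - x * y)"
      "1 - y * (1 - x) / (1 - x * y) = (1 - y) / (1 - x * y)"
    if y: "0 < y" "y < 1" for y
  proof -
    have xy: "x * y < x" using x y by simp
    have xy1: "x * y < 1" using xy x by linarith
    show "0 < x * y" "x * y < 1" "0 < 1 - x * y" using x y xy1 by auto
    have p: "0 < 1 - x * y" using xy1 by auto
    show "0 < x * (1 - y) / (1 - x * y)" "0 < y * (1 - x) / (1 - x * y)" using x y p by auto
    show "x * (1 - y) / (1 - x * y) < 1" "y * (1 - x) / (1 - x * y) < 1" using x y p xy1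
      by (simp_all add: divide_less_eq algebra_simps)
    show "1 - x * (1 - y) / (1 - x * y) = (1 - x) / (1 - x * y)"
         "1 - y * (1 - x) / (1 - x * y) = (1 - y) / (1 - x * y)" using p by (simp_all add: field_simps)
  qed
  have d: "(g has_real_derivative 0) (at y within {0<..<1})" if y: "y \<in> {0<..<1}" for y
  proof -
    from y have y': "0 < y" "y < 1" by auto
    note f = facts[OF y']
    have dxy: "((\<lambda>y. x * y) has_real_derivative x) (at y)"
      using DERIV_cmult[OF DERIV_ident, of x] by simp
    have du: "((\<lambda>y. x * (1 - y) / (1 - x * y)) has_real_derivative (- x * (1 - x) / (1 - x * y)\<^sup>2)) (at y)"
      by (rule DERIV_cong[OF DERIV_divide[OF DERIV_cmult[OF DERIV_diff[OF DERIV_const DERIV_ident]]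
            DERIV_diff[OF DERIV_const DERIV_cmult[OF DERIV_ident]]]])
         (use f in \<open>simp_all add: field_simps power2_eq_square\<close>)
    have dv: "((\<lambda>y. y * (1 - x) / (1 - x * y)) has_real_derivative ((1 - x) / (1 - x * y)\<^sup>2)) (at y)"
      by (rule DERIV_cong[OF DERIV_divide[OF DERIV_mult[OF DERIV_ident DERIV_const]
            DERIV_diff[OF DERIV_const DERIV_cmult[OF DERIV_ident]]]])
         (use f in \<open>simp_all add: field_simps power2_eq_square\<close>)
    note dg = DERIV_diff[OF DERIV_diff[OF DERIV_diff[OF DERIV_add[OF DERIV_const RogL_deriv[OF y']]
                RogL_chain[OF dxy]] RogL_chain[OF du]] RogL_chain[OF dv]]
    have lu: "ln (x * (1 - y) / (1 - x * y)) = ln x + ln (1 - y) - ln (1 - x * y)"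
      using x y' f by (simp add: ln_div ln_mult)
    have lv: "ln (y * (1 - x) / (1 - x * y)) = ln y + ln (1 - x) - ln (1 - x * y)"
      using x y' f by (simp add: ln_div ln_mult)
    have lu1: "ln ((1 - x) / (1 - x * y)) = ln (1 - x) - ln (1 - x * y)"
      using x y' f by (simp add: ln_div)
    have lv1: "ln ((1 - y) / (1 - x * y)) = ln (1 - y) - ln (1 - x * y)"
      using x y' f by (simp add: ln_div)
    have lxy: "ln (x * y) = ln x + ln y" using x y' by (simp add: ln_mult)
    have "(g has_real_derivative 0) (at y)"
      unfolding g_def
    proof (rule DERIV_cong[OF dg])
      show "0 + Ld y - Ld (x * y) * x - Ld (x * (1 - y) / (1 - x * y)) * (- x * (1 - x) / (1 - x * y)\<^sup>2)
          - Ld (y * (1 - x) / (1 - x * y)) * ((1 - x) / (1 - x * y)\<^sup>2) = 0"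
        unfolding Ld_def f(8,9) lu lv lu1 lv1 lxy
        by (rule five_alg) (use x y' f in auto)
    qed (use f in auto)
    thus ?thesis by (simp add: has_field_derivative_at_within)
  qed
  obtain c where c: "\<forall>y\<in>{0<..<1}. g y = c"
    using has_field_derivative_zero_constant[OF convex_real_interval(8) d] by blast
  have ev: "eventually (\<lambda>y. y \<in> {0<..<1}) (at_right (0::real))"
    using eventually_at_right_real[of 0 1] by simp
  have t1: "((\<lambda>y. RogL (x * y)) \<longlongrightarrow> 0) (at_right 0)"
  proof (rule RogL_lim0_comp)
    have "((\<lambda>y. x * y) \<longlongrightarrow> x * 0) (at_right 0)" by (intro tendsto_intros)
    thus "((\<lambda>y. x * y) \<longlongrightarrow> 0) (at_right 0)" by simp
    show "eventually (\<lambda>y. x * y > 0) (at_right 0)" using ev by (auto elim: eventually_mono simp: x)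
  qed
  have t2: "((\<lambda>y. RogL (y * (1 - x) / (1 - x * y))) \<longlongrightarrow> 0) (at_right 0)"
  proof (rule RogL_lim0_comp)
    have "((\<lambda>y. y * (1 - x) / (1 - x * y)) \<longlongrightarrow> 0 * (1 - x) / (1 - x * 0)) (at_right 0)"
      by (intro tendsto_intros) auto
    thus "((\<lambda>y. y * (1 - x) / (1 - x * y)) \<longlongrightarrow> 0) (at_right 0)" by simp
    show "eventually (\<lambda>y. y * (1 - x) / (1 - x * y) > 0) (at_right 0)"
      using ev by (auto elim!: eventually_mono dest: facts)
  qed
  have t3: "((\<lambda>y. RogL (x * (1 - y) / (1 - x * y))) \<longlongrightarrow> RogL x) (at_right 0)"
  proof (rule isCont_tendsto_compose[OF RogL_isCont[OF x]])
    have "((\<lambda>y. x * (1 - y) / (1 - x * y)) \<longlongrightarrow> x * (1 - 0) / (1 - x * 0)) (at_right 0)"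
      by (intro tendsto_intros) auto
    thus "((\<lambda>y. x * (1 - y) / (1 - x * y)) \<longlongrightarrow> x) (at_right 0)" by simp
  qed
  have "(g \<longlongrightarrow> RogL x + 0 - 0 - RogL x - 0) (at_right 0)"
    unfolding g_def by (intro tendsto_intros RogL_lim0 t1 t2 t3)
  hence lim: "(g \<longlongrightarrow> 0) (at_right 0)" by simp
  have "eventually (\<lambda>y. g y = c) (at_right (0::real))"
    using c ev by (auto elim: eventually_mono)
  hence gc: "(g \<longlongrightarrow> c) (at_right 0)" by (rule tendsto_eventually)
  have "c = 0" by (rule tendsto_unique[OF _ gc lim]) simp
  with c y0 have "g y0 = 0" by auto
  thus ?thesis by (simp add: g_def)
qed

definition E :: "real \<Rightarrow> real \<Rightarrow> real \<Rightarrow> real \<Rightarrow> real \<Rightarrow> real" where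
  "E r a b c d = a + b * r + c * r ^ 2 + d * r ^ 3"

lemma E_one_minus: "1 - E r a b c d = E r (1 - a) (- b) (- c) (- d)"
  by (simp add: E_def)

lemma E_mult:
  assumes r4: "r ^ 4 = - 1 - r + 6 * r ^ 2 - r ^ 3"
  shows "E r a b c d * E r e f g h =
    E r (a*e - (b*h + c*g + d*f) + (c*h + d*g) - 7*(d*h))
        (a*f + b*e - (b*h + c*g + d*f) - 6*(d*h))
        (a*g + b*f + c*e + 6*(b*h + c*g + d*f) - 7*(c*h + d*g) + 42*(d*h))
        (a*h + b*g + c*f + d*e - (b*h + c*g + d*f) + 7*(c*h + d*g) - 14*(d*h))"
proof -
  have r5: "r ^ 5 = 1 - 7 * r ^ 2 + 7 * r ^ 3" using r4 by algebra
  have r6: "r ^ 6 = - 7 - 6 * r + 42 * r ^ 2 - 14 * r ^ 3" using r4 by algebra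
  have "E r a b c d * E r e f g h = a*e + (a*f+b*e) * r + (a*g+b*f+c*e) * r^2 + (a*h+b*g+c*f+d*e) * r^3
        + (b*h+c*g+d*f) * r^4 + (c*h+d*g) * r^5 + (d*h) * r^6"
    unfolding E_def by (simp add: algebra_simps power2_eq_square power3_eq_cube power4_eq_xxxx eval_nat_numeral)
  also have "\<dots> = E r (a*e - (b*h + c*g + d*f) + (c*h + d*g) - 7*(d*h))
        (a*f + b*e - (b*h + c*g + d*f) - 6*(d*h))
        (a*g + b*f + c*e + 6*(b*h + c*g + d*f) - 7*(c*h + d*g) + 42*(d*h))
        (a*h + b*g + c*f + d*e - (b*h + c*g + d*f) + 7*(c*h + d*g) - 14*(d*h))"
    unfolding r4 r5 r6 E_def by (simp add: algebra_simps)
  finally show ?thesis .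
qed

lemma five_E:
  assumes "0 < x" "x < 1" "0 < y" "y < 1" "x * y = z" "u * (1 - z) = x * (1 - y)" "v * (1 - z) = y * (1 - x)"
  shows "RogL x + RogL y - RogL z - RogL u - RogL v = 0"
proof -
  have "x * y < x" using assms(1-4) by simp
  hence "0 < 1 - z" using assms(2,5) by linarith
  hence "u = x * (1 - y) / (1 - x * y)" "v = y * (1 - x) / (1 - x * y)"
    using assms by (simp_all add: field_simps)
  thus ?thesis using RogL_five[OF assms(1-4)] assms(5) by simp
qed

lemma refl_E:
  assumes "0 < x" "x < 1" "1 - x = y"
  shows "RogL x + RogL y - pi\<^sup>2 / 6 = 0"
  using RogL_refl[OF assms(1,2)] assms(3) by simp

context
  fixes r :: real
  assumes r4: "r ^ 4 = - 1 - r + 6 * r ^ 2 - r ^ 3"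
    and rb: "5482301/10000000 < r" "r < 5482305/10000000" "30055624254601/100000000000000 < r ^ 2" "r ^ 2 < 1202226724521/4000000000000"
            "164773978906623316901/1000000000000000000000 < r ^ 3" "r ^ 3 < 1318194716595020181/8000000000000000000"
begin

lemma b0_0: "0 < (E r 0 0 1 0)"
  unfolding E_def using rb by linarith

lemma b0_1: "(E r 0 0 1 0) < 1"
  unfolding E_def using rb by linarith

lemma b1_0: "0 < (E r 0 1 (-1) 0)"
  unfolding E_def using rb by linarith

lemma b1_1: "(E r 0 1 (-1) 0) < 1"
  unfolding E_def using rb by linarith

lemma b2_0: "0 < (E r 0 0 0 1)"
  unfolding E_def using rb by linarith

lemma b2_1: "(E r 0 0 0 1) < 1"
  unfolding E_def using rb by linarith

lemma b3_0: "0 < (E r 0 1 0 0)"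
  unfolding E_def using rb by linarith

lemma b3_1: "(E r 0 1 0 0) < 1"
  unfolding E_def using rb by linarith

lemma b4_0: "0 < (E r (1/2) (-1/2) (-1/2) (1/2))"
  unfolding E_def using rb by linarith

lemma b4_1: "(E r (1/2) (-1/2) (-1/2) (1/2)) < 1"
  unfolding E_def using rb by linarith

lemma b5_0: "0 < (E r (1/2) (-1) 1 (1/2))"
  unfolding E_def using rb by linarith

lemma b5_1: "(E r (1/2) (-1) 1 (1/2)) < 1"
  unfolding E_def using rb by linarith

lemma b6_0: "0 < (E r (-1) 2 1 0)"
  unfolding E_def using rb by linarith

lemma b6_1: "(E r (-1) 2 1 0) < 1"
  unfolding E_def using rb by linarith

lemma b7_0: "0 < (E r 0 2 (-2) (-1))"
  unfolding E_def using rb by linarith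

lemma b7_1: "(E r 0 2 (-2) (-1)) < 1"
  unfolding E_def using rb by linarith

lemma b8_0: "0 < (E r (1/2) (-1/2) 0 0)"
  unfolding E_def using rb by linarith

lemma b8_1: "(E r (1/2) (-1/2) 0 0) < 1"
  unfolding E_def using rb by linarith

lemma b9_0: "0 < (E r (1/2) 0 0 0)"
  unfolding E_def using rb by linarith

lemma b9_1: "(E r (1/2) 0 0 0) < 1"
  unfolding E_def using rb by linarith

lemma b10_0: "0 < (E r (1/2) (1/2) (-1/2) 0)"
  unfolding E_def using rb by linarith

lemma b10_1: "(E r (1/2) (1/2) (-1/2) 0) < 1"
  unfolding E_def using rb by linarith

lemma b11_0: "0 < (E r 0 (2/3) (-2/3) (-1/3))"
  unfolding E_def using rb by linarith

lemma b11_1: "(E r 0 (2/3) (-2/3) (-1/3)) < 1"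
  unfolding E_def using rb by linarith

lemma b12_0: "0 < (E r (1/3) (2/3) (-2/3) 0)"
  unfolding E_def using rb by linarith

lemma b12_1: "(E r (1/3) (2/3) (-2/3) 0) < 1"
  unfolding E_def using rb by linarith

lemma b13_0: "0 < (E r 0 (3/2) (-1) (-1/2))"
  unfolding E_def using rb by linarith

lemma b13_1: "(E r 0 (3/2) (-1) (-1/2)) < 1"
  unfolding E_def using rb by linarith

lemma b14_0: "0 < (E r (1/3) 1 (-1) (1/3))"
  unfolding E_def using rb by linarith

lemma b14_1: "(E r (1/3) 1 (-1) (1/3)) < 1"
  unfolding E_def using rb by linarith

lemma b15_0: "0 < (E r 0 (-1) 3 1)"
  unfolding E_def using rb by linarith

lemma b15_1: "(E r 0 (-1) 3 1) < 1"
  unfolding E_def using rb by linarith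

lemma b16_0: "0 < (E r (-1/2) 1 2 (1/2))"
  unfolding E_def using rb by linarith

lemma b16_1: "(E r (-1/2) 1 2 (1/2)) < 1"
  unfolding E_def using rb by linarith

lemma b17_0: "0 < (E r 0 0 (3/2) (1/2))"
  unfolding E_def using rb by linarith

lemma b17_1: "(E r 0 0 (3/2) (1/2)) < 1"
  unfolding E_def using rb by linarith

lemma b18_0: "0 < (E r (1/3) 0 0 0)"
  unfolding E_def using rb by linarith

lemma b18_1: "(E r (1/3) 0 0 0) < 1"
  unfolding E_def using rb by linarith

lemma b19_0: "0 < (E r (1/3) 0 1 (1/3))"
  unfolding E_def using rb by linarith

lemma b19_1: "(E r (1/3) 0 1 (1/3)) < 1"
  unfolding E_def using rb by linarith

lemma b20_0: "0 < (E r (1/3) (-1/3) (1/3) 0)"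
  unfolding E_def using rb by linarith

lemma b20_1: "(E r (1/3) (-1/3) (1/3) 0) < 1"
  unfolding E_def using rb by linarith

lemma b21_0: "0 < (E r (-1/2) 1 (1/2) 0)"
  unfolding E_def using rb by linarith

lemma b21_1: "(E r (-1/2) 1 (1/2) 0) < 1"
  unfolding E_def using rb by linarith

lemma b22_0: "0 < (E r 1 (-1) 0 0)"
  unfolding E_def using rb by linarith

lemma b22_1: "(E r 1 (-1) 0 0) < 1"
  unfolding E_def using rb by linarith

lemma b23_0: "0 < (E r (-1/3) 0 2 (2/3))"
  unfolding E_def using rb by linarith

lemma b23_1: "(E r (-1/3) 0 2 (2/3)) < 1"
  unfolding E_def using rb by linarith

lemma b24_0: "0 < (E r 0 2 (-1) 0)"
  unfolding E_def using rb by linarith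

lemma b24_1: "(E r 0 2 (-1) 0) < 1"
  unfolding E_def using rb by linarith

lemma b25_0: "0 < (E r (1/2) (1/2) 0 0)"
  unfolding E_def using rb by linarith

lemma b25_1: "(E r (1/2) (1/2) 0 0) < 1"
  unfolding E_def using rb by linarith

lemma b26_0: "0 < (E r 1 (-2) 1 0)"
  unfolding E_def using rb by linarith

lemma b26_1: "(E r 1 (-2) 1 0) < 1"
  unfolding E_def using rb by linarith

lemma b27_0: "0 < (E r 1 (-1) 1 0)"
  unfolding E_def using rb by linarith

lemma b27_1: "(E r 1 (-1) 1 0) < 1"
  unfolding E_def using rb by linarith

lemma b28_0: "0 < (E r 1 (-2/3) (2/3) (1/3))"
  unfolding E_def using rb by linarith

lemma b28_1: "(E r 1 (-2/3) (2/3) (1/3)) < 1"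
  unfolding E_def using rb by linarith

lemma b29_0: "0 < (E r (1/4) 0 (1/4) 0)"
  unfolding E_def using rb by linarith

lemma b29_1: "(E r (1/4) 0 (1/4) 0) < 1"
  unfolding E_def using rb by linarith

lemma b30_0: "0 < (E r (1/4) 1 0 (-1/4))"
  unfolding E_def using rb by linarith

lemma b30_1: "(E r (1/4) 1 0 (-1/4)) < 1"
  unfolding E_def using rb by linarith

lemma b31_0: "0 < (E r (1/4) (1/4) (1/4) 0)"
  unfolding E_def using rb by linarith

lemma b31_1: "(E r (1/4) (1/4) (1/4) 0) < 1"
  unfolding E_def using rb by linarith

lemma b32_0: "0 < (E r (-3/4) 2 0 (-1/4))"
  unfolding E_def using rb by linarith

lemma b32_1: "(E r (-3/4) 2 0 (-1/4)) < 1"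
  unfolding E_def using rb by linarith

lemma b33_0: "0 < (E r (1/3) (1/3) 0 0)"
  unfolding E_def using rb by linarith

lemma b33_1: "(E r (1/3) (1/3) 0 0) < 1"
  unfolding E_def using rb by linarith

lemma b34_0: "0 < (E r (1/2) (1/2) (1/2) (-1/2))"
  unfolding E_def using rb by linarith

lemma b34_1: "(E r (1/2) (1/2) (1/2) (-1/2)) < 1"
  unfolding E_def using rb by linarith

lemma b35_0: "0 < (E r (1/3) (2/3) (1/3) 0)"
  unfolding E_def using rb by linarith

lemma b35_1: "(E r (1/3) (2/3) (1/3) 0) < 1"
  unfolding E_def using rb by linarith

lemma b36_0: "0 < (E r 1 (-2) 2 1)"
  unfolding E_def using rb by linarith

lemma b36_1: "(E r 1 (-2) 2 1) < 1"
  unfolding E_def using rb by linarith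

lemma b37_0: "0 < (E r (2/3) (-2/3) (2/3) 0)"
  unfolding E_def using rb by linarith

lemma b37_1: "(E r (2/3) (-2/3) (2/3) 0) < 1"
  unfolding E_def using rb by linarith

lemma b38_0: "0 < (E r 1 0 (-1) 0)"
  unfolding E_def using rb by linarith

lemma b38_1: "(E r 1 0 (-1) 0) < 1"
  unfolding E_def using rb by linarith

lemma b39_0: "0 < (E r (3/4) (-1/4) (-1/4) 0)"
  unfolding E_def using rb by linarith

lemma b39_1: "(E r (3/4) (-1/4) (-1/4) 0) < 1"
  unfolding E_def using rb by linarith

lemma b40_0: "0 < (E r (-2) 5 (-1) (-1))"
  unfolding E_def using rb by linarith

lemma b40_1: "(E r (-2) 5 (-1) (-1)) < 1"
  unfolding E_def using rb by linarith

lemma b41_0: "0 < (E r (-3/2) 4 0 (-1/2))"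
  unfolding E_def using rb by linarith

lemma b41_1: "(E r (-3/2) 4 0 (-1/2)) < 1"
  unfolding E_def using rb by linarith

lemma b42_0: "0 < (E r (-1/2) (5/2) (-1/2) (-1/2))"
  unfolding E_def using rb by linarith

lemma b42_1: "(E r (-1/2) (5/2) (-1/2) (-1/2)) < 1"
  unfolding E_def using rb by linarith

lemma b43_0: "0 < (E r (-2/3) 3 (-1) (-2/3))"
  unfolding E_def using rb by linarith

lemma b43_1: "(E r (-2/3) 3 (-1) (-2/3)) < 1"
  unfolding E_def using rb by linarith

lemma b44_0: "0 < (E r (-2) 5 0 (-1))"
  unfolding E_def using rb by linarith

lemma b44_1: "(E r (-2) 5 0 (-1)) < 1"
  unfolding E_def using rb by linarith

lemma b45_0: "0 < (E r (-1) (5/2) (-1/2) (-1/2))"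
  unfolding E_def using rb by linarith

lemma b45_1: "(E r (-1) (5/2) (-1/2) (-1/2)) < 1"
  unfolding E_def using rb by linarith

lemma b46_0: "0 < (E r 0 (5/4) (-1/4) (-1/4))"
  unfolding E_def using rb by linarith

lemma b46_1: "(E r 0 (5/4) (-1/4) (-1/4)) < 1"
  unfolding E_def using rb by linarith

lemma b47_0: "0 < (E r (-1/2) 2 0 (-1/2))"
  unfolding E_def using rb by linarith

lemma b47_1: "(E r (-1/2) 2 0 (-1/2)) < 1"
  unfolding E_def using rb by linarith

lemma b48_0: "0 < (E r (3/2) (-1) (-2) (-1/2))"
  unfolding E_def using rb by linarith

lemma b48_1: "(E r (3/2) (-1) (-2) (-1/2)) < 1"
  unfolding E_def using rb by linarith

lemma b49_0: "0 < (E r (3/2) (-5/2) (1/2) (1/2))"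
  unfolding E_def using rb by linarith

lemma b49_1: "(E r (3/2) (-5/2) (1/2) (1/2)) < 1"
  unfolding E_def using rb by linarith

lemma b50_0: "0 < (E r 2 (-2) (-1) 0)"
  unfolding E_def using rb by linarith

lemma b50_1: "(E r 2 (-2) (-1) 0) < 1"
  unfolding E_def using rb by linarith

lemma b51_0: "0 < (E r (1/2) 0 (-1/2) 0)"
  unfolding E_def using rb by linarith

lemma b51_1: "(E r (1/2) 0 (-1/2) 0) < 1"
  unfolding E_def using rb by linarith

lemma b52_0: "0 < (E r (3/2) (-1) (-1/2) 0)"
  unfolding E_def using rb by linarith

lemma b52_1: "(E r (3/2) (-1) (-1/2) 0) < 1"
  unfolding E_def using rb by linarith

lemma b53_0: "0 < (E r 1 (-3/2) 1 (1/2))"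
  unfolding E_def using rb by linarith

lemma b53_1: "(E r 1 (-3/2) 1 (1/2)) < 1"
  unfolding E_def using rb by linarith

lemma b54_0: "0 < (E r 1 (-5/4) (1/4) (1/4))"
  unfolding E_def using rb by linarith

lemma b54_1: "(E r 1 (-5/4) (1/4) (1/4)) < 1"
  unfolding E_def using rb by linarith

lemma b55_0: "0 < (E r (-1) 6 (-4) (-2))"
  unfolding E_def using rb by linarith

lemma b55_1: "(E r (-1) 6 (-4) (-2)) < 1"
  unfolding E_def using rb by linarith

lemma b56_0: "0 < (E r (1/3) (1/2) 0 (-1/6))"
  unfolding E_def using rb by linarith

lemma b56_1: "(E r (1/3) (1/2) 0 (-1/6)) < 1"
  unfolding E_def using rb by linarith

lemma b57_0: "0 < (E r (-1/6) 1 0 (-1/6))"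
  unfolding E_def using rb by linarith

lemma b57_1: "(E r (-1/6) 1 0 (-1/6)) < 1"
  unfolding E_def using rb by linarith

lemma b58_0: "0 < (E r (1/6) (1/3) (1/6) 0)"
  unfolding E_def using rb by linarith

lemma b58_1: "(E r (1/6) (1/3) (1/6) 0) < 1"
  unfolding E_def using rb by linarith

lemma b59_0: "0 < (E r (2/3) 0 (-1) (-1/3))"
  unfolding E_def using rb by linarith

lemma b59_1: "(E r (2/3) 0 (-1) (-1/3)) < 1"
  unfolding E_def using rb by linarith

lemma b60_0: "0 < (E r 1 0 0 (-1))"
  unfolding E_def using rb by linarith

lemma b60_1: "(E r 1 0 0 (-1)) < 1"
  unfolding E_def using rb by linarith

lemma b61_0: "0 < (E r (2/3) (-1/2) 0 (1/6))"
  unfolding E_def using rb by linarith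

lemma b61_1: "(E r (2/3) (-1/2) 0 (1/6)) < 1"
  unfolding E_def using rb by linarith

lemma b62_0: "0 < (E r (-2/3) (3/2) 0 (-1/6))"
  unfolding E_def using rb by linarith

lemma b62_1: "(E r (-2/3) (3/2) 0 (-1/6)) < 1"
  unfolding E_def using rb by linarith

lemma b63_0: "0 < (E r (-1/3) 2 0 (-1/3))"
  unfolding E_def using rb by linarith

lemma b63_1: "(E r (-1/3) 2 0 (-1/3)) < 1"
  unfolding E_def using rb by linarith

lemma b64_0: "0 < (E r 0 (1/6) (1/3) (1/6))"
  unfolding E_def using rb by linarith

lemma b64_1: "(E r 0 (1/6) (1/3) (1/6)) < 1"
  unfolding E_def using rb by linarith

lemma b65_0: "0 < (E r 0 1 (-1) 1)"
  unfolding E_def using rb by linarith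

lemma b65_1: "(E r 0 1 (-1) 1) < 1"
  unfolding E_def using rb by linarith

lemma b66_0: "0 < (E r 2 (-6) 4 2)"
  unfolding E_def using rb by linarith

lemma b66_1: "(E r 2 (-6) 4 2) < 1"
  unfolding E_def using rb by linarith

lemma b67_0: "0 < (E r (1/6) (7/6) (-1/6) (-1/6))"
  unfolding E_def using rb by linarith

lemma b67_1: "(E r (1/6) (7/6) (-1/6) (-1/6)) < 1"
  unfolding E_def using rb by linarith

lemma b68_0: "0 < (E r (-1) (7/2) (-1/2) (-1/2))"
  unfolding E_def using rb by linarith

lemma b68_1: "(E r (-1) (7/2) (-1/2) (-1/2)) < 1"
  unfolding E_def using rb by linarith

lemma b69_0: "0 < (E r 0 (7/6) 0 (-1/6))"
  unfolding E_def using rb by linarith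

lemma b69_1: "(E r 0 (7/6) 0 (-1/6)) < 1"
  unfolding E_def using rb by linarith

lemma i0: "RogL (E r 0 0 1 0) + RogL (E r 1 0 (-1) 0) - pi\<^sup>2 / 6 = 0"
  by (rule refl_E[OF b0_0 b0_1]) (simp add: E_one_minus)

lemma i1: "RogL (E r 0 1 (-1) 0) + RogL (E r 1 (-1) 1 0) - pi\<^sup>2 / 6 = 0"
  by (rule refl_E[OF b1_0 b1_1]) (simp add: E_one_minus)

lemma i2: "RogL (E r 0 0 0 1) + RogL (E r 1 0 0 (-1)) - pi\<^sup>2 / 6 = 0"
  by (rule refl_E[OF b2_0 b2_1]) (simp add: E_one_minus)

lemma i3: "RogL (E r 0 1 0 0) + RogL (E r 1 (-1) 0 0) - pi\<^sup>2 / 6 = 0"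
  by (rule refl_E[OF b3_0 b3_1]) (simp add: E_one_minus)

lemma i4: "RogL (E r (1/2) (-1/2) (-1/2) (1/2)) + RogL (E r (1/2) (1/2) (1/2) (-1/2)) - pi\<^sup>2 / 6 = 0"
  by (rule refl_E[OF b4_0 b4_1]) (simp add: E_one_minus)

lemma i5: "RogL (E r (1/2) (-1) 1 (1/2)) + RogL (E r (1/2) 1 (-1) (-1/2)) - pi\<^sup>2 / 6 = 0"
  by (rule refl_E[OF b5_0 b5_1]) (simp add: E_one_minus)

lemma i6: "RogL (E r (-1) 2 1 0) + RogL (E r 2 (-2) (-1) 0) - pi\<^sup>2 / 6 = 0"
  by (rule refl_E[OF b6_0 b6_1]) (simp add: E_one_minus)

lemma i7: "RogL (E r 0 2 (-2) (-1)) + RogL (E r 1 (-2) 2 1) - pi\<^sup>2 / 6 = 0"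
  by (rule refl_E[OF b7_0 b7_1]) (simp add: E_one_minus)

lemma i8: "RogL (E r (1/2) (-1/2) 0 0) + RogL (E r (1/2) (1/2) 0 0) - pi\<^sup>2 / 6 = 0"
  by (rule refl_E[OF b8_0 b8_1]) (simp add: E_one_minus)

lemma i9: "RogL (E r (-1) 2 1 0) + RogL (E r (1/2) 0 0 0) - RogL (E r (-1/2) 1 (1/2) 0) - RogL (E r 0 1 (-1) 0) - RogL (E r (1/2) (-1/2) (1/2) 0) = 0"
  apply (rule five_E[OF b6_0 b6_1 b9_0 b9_1])
    apply (simp_all only: E_one_minus E_mult[OF r4])
    apply simp_all
  done

lemma i10: "RogL (E r (-1) 2 1 0) + RogL (E r (1/2) (1/2) (-1/2) 0) - RogL (E r 0 1 (-1) 0) - RogL (E r (-1/2) 1 (1/2) 0) - RogL (E r (1/2) 0 0 0) = 0"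
  apply (rule five_E[OF b6_0 b6_1 b10_0 b10_1])
    apply (simp_all only: E_one_minus E_mult[OF r4])
    apply simp_all
  done

lemma i11: "RogL (E r 0 (2/3) (-2/3) (-1/3)) + RogL (E r 1 (-2/3) (2/3) (1/3)) - pi\<^sup>2 / 6 = 0"
  by (rule refl_E[OF b11_0 b11_1]) (simp add: E_one_minus)

lemma i12: "RogL (E r (1/3) (2/3) (-2/3) 0) + RogL (E r (2/3) (-2/3) (2/3) 0) - pi\<^sup>2 / 6 = 0"
  by (rule refl_E[OF b12_0 b12_1]) (simp add: E_one_minus)

lemma i13: "RogL (E r 0 (3/2) (-1) (-1/2)) + RogL (E r 1 (-3/2) 1 (1/2)) - pi\<^sup>2 / 6 = 0"
  by (rule refl_E[OF b13_0 b13_1]) (simp add: E_one_minus)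

lemma i14: "RogL (E r (1/3) 1 (-1) (1/3)) + RogL (E r (2/3) (-1) 1 (-1/3)) - pi\<^sup>2 / 6 = 0"
  by (rule refl_E[OF b14_0 b14_1]) (simp add: E_one_minus)

lemma i15: "RogL (E r 0 (-1) 3 1) + RogL (E r 1 1 (-3) (-1)) - pi\<^sup>2 / 6 = 0"
  by (rule refl_E[OF b15_0 b15_1]) (simp add: E_one_minus)

lemma i16: "RogL (E r (-1/2) 1 2 (1/2)) + RogL (E r (3/2) (-1) (-2) (-1/2)) - pi\<^sup>2 / 6 = 0"
  by (rule refl_E[OF b16_0 b16_1]) (simp add: E_one_minus)

lemma i17: "RogL (E r 0 0 (3/2) (1/2)) + RogL (E r 1 0 (-3/2) (-1/2)) - pi\<^sup>2 / 6 = 0"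
  by (rule refl_E[OF b17_0 b17_1]) (simp add: E_one_minus)

lemma i18: "RogL (E r (1/3) 0 0 0) + RogL (E r (2/3) 0 0 0) - pi\<^sup>2 / 6 = 0"
  by (rule refl_E[OF b18_0 b18_1]) (simp add: E_one_minus)

lemma i19: "RogL (E r (1/3) 0 1 (1/3)) + RogL (E r (2/3) 0 (-1) (-1/3)) - pi\<^sup>2 / 6 = 0"
  by (rule refl_E[OF b19_0 b19_1]) (simp add: E_one_minus)

lemma i20: "RogL (E r (1/3) (-1/3) (1/3) 0) + RogL (E r (2/3) (1/3) (-1/3) 0) - pi\<^sup>2 / 6 = 0"
  by (rule refl_E[OF b20_0 b20_1]) (simp add: E_one_minus)

lemma i21: "RogL (E r (-1/2) 1 (1/2) 0) + RogL (E r (3/2) (-1) (-1/2) 0) - pi\<^sup>2 / 6 = 0"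
  by (rule refl_E[OF b21_0 b21_1]) (simp add: E_one_minus)

lemma i22: "RogL (E r 1 (-1) 0 0) + RogL (E r 1 (-1) 0 0) - RogL (E r 1 (-2) 1 0) - RogL (E r (2/3) 0 (-1) (-1/3)) - RogL (E r (2/3) 0 (-1) (-1/3)) = 0"
  apply (rule five_E[OF b22_0 b22_1 b22_0 b22_1])
    apply (simp_all only: E_one_minus E_mult[OF r4])
    apply simp_all
  done

lemma i23: "RogL (E r 0 1 0 0) + RogL (E r (1/3) 0 1 (1/3)) - RogL (E r (-1/3) 0 2 (2/3)) - RogL (E r 0 (1/2) 0 0) - RogL (E r (1/2) 0 0 0) = 0"
  apply (rule five_E[OF b3_0 b3_1 b19_0 b19_1])
    apply (simp_all only: E_one_minus E_mult[OF r4])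
    apply simp_all
  done

lemma i24: "RogL (E r (-1/3) 0 2 (2/3)) + RogL (E r 0 2 (-1) 0) - RogL (E r 0 0 1 0) - RogL (E r 0 (2/3) (-2/3) (-1/3)) - RogL (E r (-1/3) 2 0 (-1/3)) = 0"
  apply (rule five_E[OF b23_0 b23_1 b24_0 b24_1])
    apply (simp_all only: E_one_minus E_mult[OF r4])
    apply simp_all
  done

lemma i25: "RogL (E r (1/3) 0 1 (1/3)) + RogL (E r (1/2) (1/2) 0 0) - RogL (E r 0 0 (3/2) (1/2)) - RogL (E r (1/3) 0 0 0) - RogL (E r (1/3) (1/3) 0 0) = 0"
  apply (rule five_E[OF b19_0 b19_1 b25_0 b25_1])
    apply (simp_all only: E_one_minus E_mult[OF r4])
    apply simp_all
  done

lemma i26: "RogL (E r (1/2) (1/2) 0 0) + RogL (E r 1 (-2) 1 0) - RogL (E r (1/2) (-1/2) (-1/2) (1/2)) - RogL (E r (-1/2) 1 2 (1/2)) - RogL (E r 2 (-3) (-1) 0) = 0"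
  apply (rule five_E[OF b25_0 b25_1 b26_0 b26_1])
    apply (simp_all only: E_one_minus E_mult[OF r4])
    apply simp_all
  done

lemma i27: "RogL (E r 1 (-1) 1 0) + RogL (E r 1 (-2/3) (2/3) (1/3)) - RogL (E r 1 (-2) 2 1) - RogL (E r (1/3) (-1/3) (1/3) 0) - RogL (E r (2/3) 0 0 0) = 0"
  apply (rule five_E[OF b27_0 b27_1 b28_0 b28_1])
    apply (simp_all only: E_one_minus E_mult[OF r4])
    apply simp_all
  done

lemma i28: "RogL (E r (1/4) 0 (1/4) 0) + RogL (E r (3/4) 0 (-1/4) 0) - pi\<^sup>2 / 6 = 0"
  by (rule refl_E[OF b29_0 b29_1]) (simp add: E_one_minus)

lemma i29: "RogL (E r (1/4) 1 0 (-1/4)) + RogL (E r (3/4) (-1) 0 (1/4)) - pi\<^sup>2 / 6 = 0"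
  by (rule refl_E[OF b30_0 b30_1]) (simp add: E_one_minus)

lemma i30: "RogL (E r (1/4) (1/4) (1/4) 0) + RogL (E r (3/4) (-1/4) (-1/4) 0) - pi\<^sup>2 / 6 = 0"
  by (rule refl_E[OF b31_0 b31_1]) (simp add: E_one_minus)

lemma i31: "RogL (E r (-3/4) 2 0 (-1/4)) + RogL (E r 1 (-2) 1 0) - RogL (E r (-3/2) 3 0 (-1/2)) - RogL (E r 0 (-1/2) (3/2) (1/2)) - RogL (E r 1 (-1) (-1) 0) = 0"
  apply (rule five_E[OF b32_0 b32_1 b26_0 b26_1])
    apply (simp_all only: E_one_minus E_mult[OF r4])
    apply simp_all
  done

lemma i32: "RogL (E r 0 (-1) 3 1) + RogL (E r (1/2) 0 0 0) - RogL (E r 0 (-1/2) (3/2) (1/2)) - RogL (E r (1/2) 0 (-1/2) 0) - RogL (E r (1/4) 0 (1/4) 0) = 0"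
  apply (rule five_E[OF b15_0 b15_1 b9_0 b9_1])
    apply (simp_all only: E_one_minus E_mult[OF r4])
    apply simp_all
  done

lemma i33: "RogL (E r 0 1 0 0) + RogL (E r (1/3) (1/3) 0 0) - RogL (E r 0 (1/3) (1/3) 0) - RogL (E r 0 (3/4) 0 (-1/4)) - RogL (E r (1/4) 0 (1/4) 0) = 0"
  apply (rule five_E[OF b3_0 b3_1 b33_0 b33_1])
    apply (simp_all only: E_one_minus E_mult[OF r4])
    apply simp_all
  done

lemma i34: "RogL (E r 0 (3/2) (-1) (-1/2)) + RogL (E r (1/2) (1/2) (1/2) (-1/2)) - RogL (E r 0 (3/4) 0 (-1/4)) - RogL (E r 0 (2/3) (-2/3) (-1/3)) - RogL (E r (2/3) (1/3) (-1/3) 0) = 0"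
  apply (rule five_E[OF b13_0 b13_1 b34_0 b34_1])
    apply (simp_all only: E_one_minus E_mult[OF r4])
    apply simp_all
  done

lemma i35: "RogL (E r (1/3) (2/3) (1/3) 0) + RogL (E r (1/2) (1/2) (-1/2) 0) - RogL (E r (1/3) (2/3) (-2/3) 0) - RogL (E r (1/4) (1/2) (1/4) 0) - RogL (E r (1/4) 0 0 0) = 0"
  apply (rule five_E[OF b35_0 b35_1 b10_0 b10_1])
    apply (simp_all only: E_one_minus E_mult[OF r4])
    apply simp_all
  done

lemma i36: "RogL (E r (1/2) (-1/2) 0 0) + RogL (E r (1/2) 0 0 0) - RogL (E r (1/4) (-1/4) 0 0) - RogL (E r 1 0 (-4) 2) - RogL (E r 0 0 2 (-1)) = 0"
  apply (rule five_E[OF b8_0 b8_1 b9_0 b9_1])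
    apply (simp_all only: E_one_minus E_mult[OF r4])
    apply simp_all
  done

lemma i37: "RogL (E r (1/2) (-1/2) 0 0) + RogL (E r 1 (-2) 2 1) - RogL (E r 1 (-1) (-1) 0) - RogL (E r (3/2) (-3) (1/2) (1/2)) - RogL (E r (-3/2) 4 0 (-1/2)) = 0"
  apply (rule five_E[OF b8_0 b8_1 b36_0 b36_1])
    apply (simp_all only: E_one_minus E_mult[OF r4])
    apply simp_all
  done

lemma i38: "RogL (E r (1/2) 0 0 0) + RogL (E r (1/2) 0 0 0) - RogL (E r (1/4) 0 0 0) - RogL (E r (1/3) 0 0 0) - RogL (E r (1/3) 0 0 0) = 0"
  apply (rule five_E[OF b9_0 b9_1 b9_0 b9_1])
    apply (simp_all only: E_one_minus E_mult[OF r4])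
    apply simp_all
  done

lemma i39: "RogL (E r (1/2) 0 0 0) + RogL (E r (2/3) (-2/3) (2/3) 0) - RogL (E r (1/3) (-1/3) (1/3) 0) - RogL (E r (1/4) (1/2) (-1/2) (-1/4)) - RogL (E r (1/2) (-1) 1 (1/2)) = 0"
  apply (rule five_E[OF b9_0 b9_1 b37_0 b37_1])
    apply (simp_all only: E_one_minus E_mult[OF r4])
    apply simp_all
  done

lemma i40: "RogL (E r (1/2) (1/2) (-1/2) 0) + RogL (E r 1 0 (-1) 0) - RogL (E r 0 0 2 (-1)) - RogL (E r (1/4) (1/2) (-1/2) (-1/4)) - RogL (E r 1 0 (-3/2) (-1/2)) = 0"
  apply (rule five_E[OF b10_0 b10_1 b38_0 b38_1])
    apply (simp_all only: E_one_minus E_mult[OF r4])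
    apply simp_all
  done

lemma i41: "RogL (E r (1/2) (1/2) 0 0) + RogL (E r (1/2) (1/2) 0 0) - RogL (E r (1/4) (1/2) (1/4) 0) - RogL (E r 0 0 2 (-1)) - RogL (E r 0 0 2 (-1)) = 0"
  apply (rule five_E[OF b25_0 b25_1 b25_0 b25_1])
    apply (simp_all only: E_one_minus E_mult[OF r4])
    apply simp_all
  done

lemma i42: "RogL (E r (3/4) (-1/4) (-1/4) 0) + RogL (E r 1 0 (-1) 0) - RogL (E r (1/2) (-1/2) (1/2) 0) - RogL (E r 0 (-1/2) (3/2) (1/2)) - RogL (E r 0 (-1) 3 1) = 0"
  apply (rule five_E[OF b39_0 b39_1 b38_0 b38_1])
    apply (simp_all only: E_one_minus E_mult[OF r4])
    apply simp_all
  done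

lemma i43: "RogL (E r (-2) 5 (-1) (-1)) + RogL (E r 3 (-5) 1 1) - pi\<^sup>2 / 6 = 0"
  by (rule refl_E[OF b40_0 b40_1]) (simp add: E_one_minus)

lemma i44: "RogL (E r (-3/2) 4 0 (-1/2)) + RogL (E r (5/2) (-4) 0 (1/2)) - pi\<^sup>2 / 6 = 0"
  by (rule refl_E[OF b41_0 b41_1]) (simp add: E_one_minus)

lemma i45: "RogL (E r (-1/2) (5/2) (-1/2) (-1/2)) + RogL (E r (3/2) (-5/2) (1/2) (1/2)) - pi\<^sup>2 / 6 = 0"
  by (rule refl_E[OF b42_0 b42_1]) (simp add: E_one_minus)

lemma i46: "RogL (E r (-2/3) 3 (-1) (-2/3)) + RogL (E r (5/3) (-3) 1 (2/3)) - pi\<^sup>2 / 6 = 0"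
  by (rule refl_E[OF b43_0 b43_1]) (simp add: E_one_minus)

lemma i47: "RogL (E r (-2) 5 0 (-1)) + RogL (E r 3 (-5) 0 1) - pi\<^sup>2 / 6 = 0"
  by (rule refl_E[OF b44_0 b44_1]) (simp add: E_one_minus)

lemma i48: "RogL (E r 0 1 0 0) + RogL (E r 0 2 (-1) 0) - RogL (E r 0 0 2 (-1)) - RogL (E r (-1/2) 1 (1/2) 0) - RogL (E r (-1/2) (5/2) (-1/2) (-1/2)) = 0"
  apply (rule five_E[OF b3_0 b3_1 b24_0 b24_1])
    apply (simp_all only: E_one_minus E_mult[OF r4])
    apply simp_all
  done

lemma i49: "RogL (E r (-1) 2 1 0) + RogL (E r (-1) (5/2) (-1/2) (-1/2)) - RogL (E r 2 (-3) (-1) 0) - RogL (E r (3/2) (-5/2) (1/2) (1/2)) - RogL (E r (3/2) (-3) (1/2) (1/2)) = 0"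
  apply (rule five_E[OF b6_0 b6_1 b45_0 b45_1])
    apply (simp_all only: E_one_minus E_mult[OF r4])
    apply simp_all
  done

lemma i50: "RogL (E r (-1/2) 1 (1/2) 0) + RogL (E r 0 (5/4) (-1/4) (-1/4)) - RogL (E r (1/4) (-1/4) 0 0) - RogL (E r (-1) 2 0 0) - RogL (E r (-1/2) 2 0 (-1/2)) = 0"
  apply (rule five_E[OF b21_0 b21_1 b46_0 b46_1])
    apply (simp_all only: E_one_minus E_mult[OF r4])
    apply simp_all
  done

lemma i51: "RogL (E r (-1/2) 1 2 (1/2)) + RogL (E r 1 (-1) 0 0) - RogL (E r 0 2 (-2) (-1)) - RogL (E r (1/4) (1/2) (1/4) 0) - RogL (E r (3/4) (-5/4) (1/4) (1/4)) = 0"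
  apply (rule five_E[OF b16_0 b16_1 b22_0 b22_1])
    apply (simp_all only: E_one_minus E_mult[OF r4])
    apply simp_all
  done

lemma i52: "RogL (E r (-1/2) 2 0 (-1/2)) + RogL (E r (3/2) (-1) (-2) (-1/2)) - RogL (E r (-1) (5/2) (-1/2) (-1/2)) - RogL (E r 0 0 2 (-1)) - RogL (E r 1 (-1) (-1) 0) = 0"
  apply (rule five_E[OF b47_0 b47_1 b48_0 b48_1])
    apply (simp_all only: E_one_minus E_mult[OF r4])
    apply simp_all
  done

lemma i53: "RogL (E r (1/4) 1 0 (-1/4)) + RogL (E r (3/2) (-5/2) (1/2) (1/2)) - RogL (E r 0 (1/2) 0 0) - RogL (E r (1/2) 1 (-1) (-1/2)) - RogL (E r 1 (-3) 2 1) = 0"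
  apply (rule five_E[OF b30_0 b30_1 b49_0 b49_1])
    apply (simp_all only: E_one_minus E_mult[OF r4])
    apply simp_all
  done

lemma i54: "RogL (E r (1/3) (1/3) 0 0) + RogL (E r 2 (-2) (-1) 0) - RogL (E r (2/3) 0 (-1) (-1/3)) - RogL (E r (-1/3) (4/3) (-1/3) 0) - RogL (E r 3 (-5) 0 1) = 0"
  apply (rule five_E[OF b33_0 b33_1 b50_0 b50_1])
    apply (simp_all only: E_one_minus E_mult[OF r4])
    apply simp_all
  done

lemma i55: "RogL (E r (1/3) (2/3) (-2/3) 0) + RogL (E r 2 (-2) (-1) 0) - RogL (E r 0 0 1 0) - RogL (E r 0 (1/3) (1/3) 0) - RogL (E r (5/3) (-3) 1 (2/3)) = 0"
  apply (rule five_E[OF b12_0 b12_1 b50_0 b50_1])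
    apply (simp_all only: E_one_minus E_mult[OF r4])
    apply simp_all
  done

lemma i56: "RogL (E r (1/2) 0 (-1/2) 0) + RogL (E r (3/2) (-1) (-1/2) 0) - RogL (E r (1/2) (-3/4) (1/2) (1/4)) - RogL (E r (-1) 2 0 0) - RogL (E r 3 (-5) 1 1) = 0"
  apply (rule five_E[OF b51_0 b51_1 b52_0 b52_1])
    apply (simp_all only: E_one_minus E_mult[OF r4])
    apply simp_all
  done

lemma i57: "RogL (E r (1/2) 0 0 0) + RogL (E r 1 (-3/2) 1 (1/2)) - RogL (E r (1/2) (-3/4) (1/2) (1/4)) - RogL (E r (-3/4) 2 0 (-1/4)) - RogL (E r (5/2) (-4) 0 (1/2)) = 0"
  apply (rule five_E[OF b9_0 b9_1 b53_0 b53_1])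
    apply (simp_all only: E_one_minus E_mult[OF r4])
    apply simp_all
  done

lemma i58: "RogL (E r (1/2) (1/2) (1/2) (-1/2)) + RogL (E r (3/2) (-1) (-1/2) 0) - RogL (E r (3/4) 0 (-1/4) 0) - RogL (E r (-1/2) 2 0 (-1/2)) - RogL (E r (5/2) (-4) 0 (1/2)) = 0"
  apply (rule five_E[OF b34_0 b34_1 b52_0 b52_1])
    apply (simp_all only: E_one_minus E_mult[OF r4])
    apply simp_all
  done

lemma i59: "RogL (E r (3/4) (-1/4) (-1/4) 0) + RogL (E r 1 (-1) 0 0) - RogL (E r (3/4) (-1) 0 (1/4)) - RogL (E r (5/2) (-4) 0 (1/2)) - RogL (E r (-2) 5 (-1) (-1)) = 0"
  apply (rule five_E[OF b39_0 b39_1 b22_0 b22_1])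
    apply (simp_all only: E_one_minus E_mult[OF r4])
    apply simp_all
  done

lemma i60: "RogL (E r 1 (-2) 1 0) + RogL (E r 1 (-5/4) (1/4) (1/4)) - RogL (E r (3/2) (-3) (1/2) (1/2)) - RogL (E r 1 0 (-4) 2) - RogL (E r (1/2) (-1/2) (1/2) 0) = 0"
  apply (rule five_E[OF b26_0 b26_1 b54_0 b54_1])
    apply (simp_all only: E_one_minus E_mult[OF r4])
    apply simp_all
  done

lemma i61: "RogL (E r (-1) 6 (-4) (-2)) + RogL (E r 2 (-6) 4 2) - pi\<^sup>2 / 6 = 0"
  by (rule refl_E[OF b55_0 b55_1]) (simp add: E_one_minus)

lemma i62: "RogL (E r (1/3) (1/2) 0 (-1/6)) + RogL (E r (2/3) (-1/2) 0 (1/6)) - pi\<^sup>2 / 6 = 0"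
  by (rule refl_E[OF b56_0 b56_1]) (simp add: E_one_minus)

lemma i63: "RogL (E r 0 1 0 0) + RogL (E r 0 1 0 0) - RogL (E r 0 0 1 0) - RogL (E r (-1/6) 1 0 (-1/6)) - RogL (E r (-1/6) 1 0 (-1/6)) = 0"
  apply (rule five_E[OF b3_0 b3_1 b3_0 b3_1])
    apply (simp_all only: E_one_minus E_mult[OF r4])
    apply simp_all
  done

lemma i64: "RogL (E r (-1/2) 1 (1/2) 0) + RogL (E r (-1/6) 1 0 (-1/6)) - RogL (E r (1/6) (-1/2) (1/2) (1/6)) - RogL (E r (-1) (5/2) (-1/2) (-1/2)) - RogL (E r (-3/4) 2 0 (-1/4)) = 0"
  apply (rule five_E[OF b21_0 b21_1 b57_0 b57_1])
    apply (simp_all only: E_one_minus E_mult[OF r4])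
    apply simp_all
  done

lemma i65: "RogL (E r (-1/6) 1 0 (-1/6)) + RogL (E r 0 1 0 0) - RogL (E r (1/6) 0 0 (1/6)) - RogL (E r (-1/2) 1 (1/2) 0) - RogL (E r 0 (3/2) (-1) (-1/2)) = 0"
  apply (rule five_E[OF b57_0 b57_1 b3_0 b3_1])
    apply (simp_all only: E_one_minus E_mult[OF r4])
    apply simp_all
  done

lemma i66: "RogL (E r (-1/6) 1 0 (-1/6)) + RogL (E r (1/6) (1/3) (1/6) 0) - RogL (E r 0 (1/6) (1/6) 0) - RogL (E r 0 1 (-1) 0) - RogL (E r 0 0 1 0) = 0"
  apply (rule five_E[OF b57_0 b57_1 b58_0 b58_1])
    apply (simp_all only: E_one_minus E_mult[OF r4])
    apply simp_all
  done

lemma i67: "RogL (E r (-1/6) 1 0 (-1/6)) + RogL (E r (2/3) 0 (-1) (-1/3)) - RogL (E r 0 (2/3) (-2/3) (-1/3)) - RogL (E r 0 (1/2) 0 0) - RogL (E r (1/2) (-1/2) 0 0) = 0"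
  apply (rule five_E[OF b57_0 b57_1 b59_0 b59_1])
    apply (simp_all only: E_one_minus E_mult[OF r4])
    apply simp_all
  done

lemma i68: "RogL (E r (1/3) 0 1 (1/3)) + RogL (E r 1 0 (-1) 0) - RogL (E r 1 1 (-3) (-1)) - RogL (E r (1/6) (1/3) (1/6) 0) - RogL (E r (2/3) (-1/2) 0 (1/6)) = 0"
  apply (rule five_E[OF b19_0 b19_1 b38_0 b38_1])
    apply (simp_all only: E_one_minus E_mult[OF r4])
    apply simp_all
  done

lemma i69: "RogL (E r 1 0 0 (-1)) + RogL (E r (3/2) (-1) (-1/2) 0) - RogL (E r 1 (-2) 2 1) - RogL (E r (2/3) (-2/3) (2/3) 0) - RogL (E r (1/6) (1/3) (1/6) 0) = 0"
  apply (rule five_E[OF b60_0 b60_1 b52_0 b52_1])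
    apply (simp_all only: E_one_minus E_mult[OF r4])
    apply simp_all
  done

lemma i70: "RogL (E r (-1) 6 (-4) (-2)) + RogL (E r (1/3) (1/2) 0 (-1/6)) - RogL (E r 0 (3/2) (-1) (-1/2)) - RogL (E r (-2/3) 3 (-1) (-2/3)) - RogL (E r (1/3) (-1/3) (1/3) 0) = 0"
  apply (rule five_E[OF b55_0 b55_1 b56_0 b56_1])
    apply (simp_all only: E_one_minus E_mult[OF r4])
    apply simp_all
  done

lemma i71: "RogL (E r (-1) 6 (-4) (-2)) + RogL (E r (1/3) (2/3) (-2/3) 0) - RogL (E r (-1/3) 0 2 (2/3)) - RogL (E r (-3/2) 4 0 (-1/2)) - RogL (E r (1/6) 0 0 (1/6)) = 0"
  apply (rule five_E[OF b55_0 b55_1 b12_0 b12_1])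
    apply (simp_all only: E_one_minus E_mult[OF r4])
    apply simp_all
  done

lemma i72: "RogL (E r (-3/4) 2 0 (-1/4)) + RogL (E r (2/3) (-1/2) 0 (1/6)) - RogL (E r (-2/3) (3/2) 0 (-1/6)) - RogL (E r (1/4) (3/4) (-5/4) (-1/2)) - RogL (E r (1/2) (-1) 1 (1/2)) = 0"
  apply (rule five_E[OF b32_0 b32_1 b61_0 b61_1])
    apply (simp_all only: E_one_minus E_mult[OF r4])
    apply simp_all
  done

lemma i73: "RogL (E r (-3/4) 2 0 (-1/4)) + RogL (E r 1 (-1) 0 0) - RogL (E r (-1) (5/2) (-1/2) (-1/2)) - RogL (E r (1/6) 0 0 (1/6)) - RogL (E r (2/3) (-1) 1 (-1/3)) = 0"
  apply (rule five_E[OF b32_0 b32_1 b22_0 b22_1])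
    apply (simp_all only: E_one_minus E_mult[OF r4])
    apply simp_all
  done

lemma i74: "RogL (E r (-2/3) (3/2) 0 (-1/6)) + RogL (E r 0 1 0 0) - RogL (E r (1/6) (-1/2) (1/2) (1/6)) - RogL (E r (-3/2) 3 0 (-1/2)) - RogL (E r (-1/2) 2 0 (-1/2)) = 0"
  apply (rule five_E[OF b62_0 b62_1 b3_0 b3_1])
    apply (simp_all only: E_one_minus E_mult[OF r4])
    apply simp_all
  done

lemma i75: "RogL (E r (-1/2) 2 0 (-1/2)) + RogL (E r (1/3) 0 1 (1/3)) - RogL (E r (-1/6) 1 0 (-1/6)) - RogL (E r 0 1 (-1) 0) - RogL (E r 0 (-1) 3 1) = 0"
  apply (rule five_E[OF b47_0 b47_1 b19_0 b19_1])
    apply (simp_all only: E_one_minus E_mult[OF r4])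
    apply simp_all
  done

lemma i76: "RogL (E r (-1/3) 0 2 (2/3)) + RogL (E r (1/3) (1/2) 0 (-1/6)) - RogL (E r 0 (1/6) (1/3) (1/6)) - RogL (E r (1/4) (3/4) (-5/4) (-1/2)) - RogL (E r (1/4) (1/4) (1/4) 0) = 0"
  apply (rule five_E[OF b23_0 b23_1 b56_0 b56_1])
    apply (simp_all only: E_one_minus E_mult[OF r4])
    apply simp_all
  done

lemma i77: "RogL (E r (-1/3) 2 0 (-1/3)) + RogL (E r (-1/6) 1 0 (-1/6)) - RogL (E r (1/3) (-1/3) (1/3) 0) - RogL (E r (-3/2) 4 0 (-1/2)) - RogL (E r (-1) (5/2) (-1/2) (-1/2)) = 0"
  apply (rule five_E[OF b63_0 b63_1 b57_0 b57_1])
    apply (simp_all only: E_one_minus E_mult[OF r4])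
    apply simp_all
  done

lemma i78: "RogL (E r (-1/3) 2 0 (-1/3)) + RogL (E r 1 (-5/4) (1/4) (1/4)) - RogL (E r (-3/4) 2 0 (-1/4)) - RogL (E r (1/3) (1/2) 0 (-1/6)) - RogL (E r (3/4) (-5/4) (1/4) (1/4)) = 0"
  apply (rule five_E[OF b63_0 b63_1 b54_0 b54_1])
    apply (simp_all only: E_one_minus E_mult[OF r4])
    apply simp_all
  done

lemma i79: "RogL (E r 0 (1/6) (1/3) (1/6)) + RogL (E r 0 1 (-1) 1) - RogL (E r (-1) (-1) 6 (-1)) - RogL (E r 0 (1/6) (1/6) 0) - RogL (E r (-1/6) 1 0 (-1/6)) = 0"
  apply (rule five_E[OF b64_0 b64_1 b65_0 b65_1])
    apply (simp_all only: E_one_minus E_mult[OF r4])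
    apply simp_all
  done

lemma i80: "RogL (E r 0 (5/4) (-1/4) (-1/4)) + RogL (E r 2 (-6) 4 2) - RogL (E r (-1) (5/2) (-1/2) (-1/2)) - RogL (E r (1/2) 0 0 0) - RogL (E r 1 (-3) 2 1) = 0"
  apply (rule five_E[OF b46_0 b46_1 b66_0 b66_1])
    apply (simp_all only: E_one_minus E_mult[OF r4])
    apply simp_all
  done

lemma i81: "RogL (E r 0 2 (-1) 0) + RogL (E r (1/3) (2/3) (1/3) 0) - RogL (E r (1/3) 1 (-1) (1/3)) - RogL (E r 0 (3/2) (-1) (-1/2)) - RogL (E r (-1/6) (-1/2) (5/2) (5/6)) = 0"
  apply (rule five_E[OF b24_0 b24_1 b35_0 b35_1])
    apply (simp_all only: E_one_minus E_mult[OF r4])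
    apply simp_all
  done

lemma i82: "RogL (E r 0 1 0 0) + RogL (E r (1/6) (7/6) (-1/6) (-1/6)) - RogL (E r (1/6) (1/3) (1/6) 0) - RogL (E r 0 1 (-1) 0) - RogL (E r 0 1 0 0) = 0"
  apply (rule five_E[OF b3_0 b3_1 b67_0 b67_1])
    apply (simp_all only: E_one_minus E_mult[OF r4])
    apply simp_all
  done

lemma i83: "RogL (E r 0 (3/2) (-1) (-1/2)) + RogL (E r 0 2 (-1) 0) - RogL (E r (1/2) 0 (-1/2) 0) - RogL (E r (-1) (5/2) (-1/2) (-1/2)) - RogL (E r (-1) (7/2) (-1/2) (-1/2)) = 0"
  apply (rule five_E[OF b13_0 b13_1 b24_0 b24_1])
    apply (simp_all only: E_one_minus E_mult[OF r4])
    apply simp_all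
  done

lemma i84: "RogL (E r (-1) (7/2) (-1/2) (-1/2)) + RogL (E r (-1/3) 0 2 (2/3)) - RogL (E r 0 (-1/2) (3/2) (1/2)) - RogL (E r (-2) 5 0 (-1)) - RogL (E r (-1/3) 1 0 (-1/3)) = 0"
  apply (rule five_E[OF b68_0 b68_1 b23_0 b23_1])
    apply (simp_all only: E_one_minus E_mult[OF r4])
    apply simp_all
  done

lemma i85: "RogL (E r (-1/2) 1 2 (1/2)) + RogL (E r 0 (7/6) 0 (-1/6)) - RogL (E r (-1/6) (-1/2) (5/2) (5/6)) - RogL (E r (-1/2) 2 0 (-1/2)) - RogL (E r (-1/3) (4/3) (-1/3) 0) = 0"
  apply (rule five_E[OF b16_0 b16_1 b69_0 b69_1])
    apply (simp_all only: E_one_minus E_mult[OF r4])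
    apply simp_all
  done

lemma i86: "RogL (E r 0 1 (-1) 1) + RogL (E r (1/6) (7/6) (-1/6) (-1/6)) - RogL (E r 0 0 1 0) - RogL (E r (-1/3) 1 0 (-1/3)) - RogL (E r 0 (7/6) 0 (-1/6)) = 0"
  apply (rule five_E[OF b65_0 b65_1 b67_0 b67_1])
    apply (simp_all only: E_one_minus E_mult[OF r4])
    apply simp_all
  done

lemma i87: "RogL (E r 0 0 0 1) + RogL (E r 0 0 0 1) - RogL (E r (-7) (-6) 42 (-14)) - RogL (E r 0 (1/6) (1/6) 0) - RogL (E r 0 (1/6) (1/6) 0) = 0"
  apply (rule five_E[OF b2_0 b2_1 b2_0 b2_1])
    apply (simp_all only: E_one_minus E_mult[OF r4])
    apply simp_all
  done

lemma mainL: "3 * RogL (E r (-7) (-6) 42 (-14)) + 3 * RogL (E r (-1) (-1) 6 (-1)) - 8 * RogL (E r 0 0 0 1) - 33 * RogL (E r 0 0 1 0) + 24 * RogL (E r 0 1 0 0) - pi\<^sup>2 / 6 = 0"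
  using i0 i1 i2 i3 i4 i5 i6 i7 i8 i9 i10 i11 i12 i13 i14 i15 i16 i17 i18 i19 i20 i21 i22 i23 i24 i25 i26 i27 i28 i29 i30 i31 i32 i33 i34 i35 i36 i37 i38 i39 i40 i41 i42 i43 i44 i45 i46 i47 i48 i49 i50 i51 i52 i53 i54 i55 i56 i57 i58 i59 i60 i61 i62 i63 i64 i65 i66 i67 i68 i69 i70 i71 i72 i73 i74 i75 i76 i77 i78 i79 i80 i81 i82 i83 i84 i85 i86 i87 by argo

end

lemma r_facts:
  fixes r :: real
  assumes "r = (-1 + sqrt 33 - sqrt (2 * (9 - sqrt 33))) / 4"
  shows "r ^ 4 = - 1 - r + 6 * r ^ 2 - r ^ 3" "5482301/10000000 < r" "r < 5482305/10000000"
proof -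
  define s where "s = sqrt 33"
  define q where "q = sqrt (2 * (9 - s))"
  have s2: "s ^ 2 = 33" unfolding s_def by simp
  have slo: "5744562646/1000000000 < s" unfolding s_def by (rule real_less_rsqrt) (simp add: power2_eq_square)
  have "s < sqrt ((5744562647/1000000000) ^ 2)" unfolding s_def by (simp only: real_sqrt_less_iff) (simp add: power2_eq_square)
  hence shi: "s < 5744562647/1000000000" by simp
  have q2: "q ^ 2 = 2 * (9 - s)" unfolding q_def using shi by simp
  have qlo: "2551641/1000000 < q" unfolding q_def by (rule real_less_rsqrt) (use shi in \<open>simp add: power2_eq_square\<close>)
  have "q < sqrt ((2551642/1000000) ^ 2)" unfolding q_def by (simp only: real_sqrt_less_iff) (use slo in \<open>simp add: power2_eq_square\<close>)
  hence qhi: "q < 2551642/1000000" by simp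
  have rr: "r = (-1 + s - q) / 4" using assms unfolding s_def q_def .
  have rr4: "4 * r = -1 + s - q" using rr by simp
  have "4 * r + 1 - s = - q" using rr4 by linarith
  hence "(4 * r + 1 - s) ^ 2 = q ^ 2" by simp
  hence h1: "(4 * r + 1 - s) ^ 2 = 2 * (9 - s)" using q2 by simp
  have h2: "r * s = 2 * r ^ 2 + r + 2" using h1 s2 by algebra
  have "(r * s) ^ 2 = r ^ 2 * 33" using s2 by (simp add: power_mult_distrib)
  hence "(2 * r ^ 2 + r + 2) ^ 2 = r ^ 2 * 33" using h2 by simp
  thus "r ^ 4 = - 1 - r + 6 * r ^ 2 - r ^ 3" by algebra
  have rr4': "4 * r = -1 + s - q" using rr by simp
  show "5482301/10000000 < r" using rr4' slo shi qlo qhi by linarith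
  show "r < 5482305/10000000" using rr4' slo shi qlo qhi by linarith
qed

lemma Li2_RogL: "Li2 x = RogL x - ln x * ln (1 - x) / 2"
  by (simp add: RogL_def)

theorem mainTheorem3:
  fixes r :: real
  assumes "r = (-1 + sqrt 33 - sqrt (2 * (9 - sqrt 33))) / 4"
  shows "3 * Li2 (r ^ 6) + 3 * Li2 (r ^ 4) - 8 * Li2 (r ^ 3) - 33 * Li2 (r ^ 2)
           + 24 * Li2 r - zeta2 = 6 * (ln r)\<^sup>2"
proof -
  note rf = r_facts[OF assms]
  have r4: "r ^ 4 = - 1 - r + 6 * r ^ 2 - r ^ 3" by (rule rf(1))
  have r0: "0 < r" "r < 1" using rf by linarith+
  have b2: "30055624254601/100000000000000 < r ^ 2" "r ^ 2 < 1202226724521/4000000000000"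
    using power_strict_mono[OF rf(2), of 2] power_strict_mono[OF rf(3), of 2] r0 by (simp_all add: power2_eq_square)
  have b3: "164773978906623316901/1000000000000000000000 < r ^ 3" "r ^ 3 < 1318194716595020181/8000000000000000000"
    using power_strict_mono[OF rf(2), of 3] power_strict_mono[OF rf(3), of 3] r0 by (simp_all add: power3_eq_cube)
  note L = mainL[OF r4 rf(2,3) b2 b3]
  have e6: "E r (-7) (-6) 42 (-14) = r ^ 6" using r4 unfolding E_def by algebra
  have e4: "E r (-1) (-1) 6 (-1) = r ^ 4" using r4 unfolding E_def by simp
  have e3: "E r 0 0 0 1 = r ^ 3" "E r 0 0 1 0 = r ^ 2" "E r 0 1 0 0 = r" unfolding E_def by simp_all
  have L': "3 * RogL (r ^ 6) + 3 * RogL (r ^ 4) - 8 * RogL (r ^ 3) - 33 * RogL (r ^ 2) + 24 * RogL r - pi\<^sup>2 / 6 = 0"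
    using L unfolding e6 e4 e3 .
  define a where "a = ln (1 - r)"
  define b where "b = ln (1 + r)"
  define c where "c = ln (1 + r + r ^ 2)"
  define d where "d = ln (1 - r + r ^ 2)"
  define e where "e = ln (1 + r ^ 2)"
  define l where "l = ln r"
  have p: "0 < 1 - r" "0 < 1 + r" "0 < 1 + r + r ^ 2" "0 < 1 - r + r ^ 2" "0 < 1 + r ^ 2"
    using r0 b2 by linarith+
  have f2: "1 - r ^ 2 = (1 - r) * (1 + r)" by (simp add: algebra_simps power2_eq_square)
  have f3: "1 - r ^ 3 = (1 - r) * (1 + r + r ^ 2)" by (simp add: algebra_simps power2_eq_square power3_eq_cube)
  have f4: "1 - r ^ 4 = (1 - r) * (1 + r) * (1 + r ^ 2)" by (simp add: algebra_simps power2_eq_square power4_eq_xxxx)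
  have f6: "1 - r ^ 6 = (1 - r) * (1 + r) * (1 + r + r ^ 2) * (1 - r + r ^ 2)"
    by (simp add: algebra_simps power2_eq_square eval_nat_numeral)
  have poly: "(1 - r) ^ 6 * (1 + r) ^ 6 * (1 + r + r ^ 2) = r ^ 2 * (1 - r + r ^ 2) ^ 3 * (1 + r ^ 2) ^ 2"
    using r4 by algebra
  have rel: "6 * a + 6 * b + c = 2 * l + 3 * d + 2 * e"
  proof -
    have "ln ((1 - r) ^ 6 * (1 + r) ^ 6 * (1 + r + r ^ 2)) = ln (r ^ 2 * (1 - r + r ^ 2) ^ 3 * (1 + r ^ 2) ^ 2)"
      by (simp only: poly)
    thus ?thesis using p r0 by (simp add: ln_mult ln_realpow a_def b_def c_def d_def e_def l_def)
  qed
  have l2: "ln (1 - r ^ 2) = a + b" unfolding f2 using p by (simp add: ln_mult a_def b_def)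
  have l3: "ln (1 - r ^ 3) = a + c" unfolding f3 using p by (simp add: ln_mult a_def c_def)
  have l4: "ln (1 - r ^ 4) = a + b + e" unfolding f4 using p by (simp add: ln_mult a_def b_def e_def)
  have l6: "ln (1 - r ^ 6) = a + b + c + d" unfolding f6 using p by (simp add: ln_mult a_def b_def c_def d_def)
  have lp: "ln (r ^ 6) = 6 * l" "ln (r ^ 4) = 4 * l" "ln (r ^ 3) = 3 * l" "ln (r ^ 2) = 2 * l"
    by (simp_all add: ln_realpow l_def)
  have X: "3 * Li2 (r ^ 6) + 3 * Li2 (r ^ 4) - 8 * Li2 (r ^ 3) - 33 * Li2 (r ^ 2) + 24 * Li2 r - zeta2
      = (3 * RogL (r ^ 6) + 3 * RogL (r ^ 4) - 8 * RogL (r ^ 3) - 33 * RogL (r ^ 2) + 24 * RogL r - pi\<^sup>2 / 6)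
        - l * (18 * (a + b + c + d) + 12 * (a + b + e) - 24 * (a + c) - 66 * (a + b) + 24 * a) / 2"
    unfolding Li2_RogL lp l2 l3 l4 l6 zeta2_def l_def[symmetric] a_def[symmetric]
    by (simp add: field_simps)
  have S: "18 * (a + b + c + d) + 12 * (a + b + e) - 24 * (a + c) - 66 * (a + b) + 24 * a = - 12 * l"
  proof -
    have "18 * (a + b + c + d) + 12 * (a + b + e) - 24 * (a + c) - 66 * (a + b) + 24 * a
        = - 6 * (6 * a + 6 * b + c) + 18 * d + 12 * e" by (simp add: algebra_simps)
    also have "\<dots> = - 12 * l" unfolding rel by (simp add: algebra_simps)
    finally show ?thesis .
  qed
  show ?thesis unfolding X S L' l_def[symmetric] by (simp add: power2_eq_square)
qed

end
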